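(* (a) Under the hypotheses of Theorem 4.3 (i.e. $2\le r\le m\le n$, $\mathbf u_1,\dots,\mathbf u_m\in F[t]^n$ of degree at most $k-1$ in $t$, written $\mathbf u_j=\sum_{l=0}^{k-1}\mathbf u_j^{(l)}t^l$, with all $r$-fold wedge products of the $\mathbf u_j$ vanishing modulo $t^k$ and $\mathbf u_1^{(0)}\wedge\dots\wedge\mathbf u_{r-1}^{(0)}\neq0$), for every $w$ with $0\le w<2k$ and every $1\le j_1<\dots<j_{r+1}\le m$, $$\sum_{\substack{l_1+\dots+l_{r+1}=w\\0\le l_i<k}}\mathbf u_{j_1}^{(l_1)}\wedge\dots\wedge\mathbf u_{j_r}^{(l_r)}\wedge\mathbf u_{j_{r+1}}^{(l_{r+1})}=0\quad\text{in }\textstyle\bigwedge^{r+1}F^n.$$ (b) In particular, for $3\le m\le n$ and $k\ge1$, at every point of the Zariski closure $Z_0$ in $\mathcal Z^{m,n}_{2,k}$ of the set of points at which some $x^{(0)}_{i,j}\neq0$, the rows satisfy, for all $0\le w<2k$ and all $1\le j_1<j_2<j_3\le m$, $$\sum_{\substack{l_1+l_2+l_3=w\\0\le l_1,l_2,l_3<k}}\mathbf u_{j_1}^{(l_1)}\wedge\mathbf u_{j_2}^{(l_2)}\wedge\mathbf u_{j_3}^{(l_3)}=0.$$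
   Context: Let $F$ be an algebraically closed field. For integers $1\le r\le m\le n$ and $k\ge 1$, let $S=F[x^{(l)}_{i,j}:1\le i\le m,\ 1\le j\le n,\ 0\le l\le k-1]$, the coordinate ring of $\mathbf A^{mnk}_F$, and let $X(t)$ be the $m\times n$ matrix over $S[t]/(t^k)$ with $(i,j)$ entry $x_{i,j}(t)=\sum_{l=0}^{k-1}x^{(l)}_{i,j}t^l$. $\mathcal I^{m,n}_{r,k}\subseteq S$ is the ideal generated by the coefficients of $t^l$, $0\le l\le k-1$, of all $r\times r$ minors of $X(t)$, and $\mathcal Z^{m,n}_{r,k}\subseteq\mathbf A^{mnk}_F$ is its zero set. For a point of $\mathbf A^{mnk}$, $\mathbf u_i^{(l)}=(x^{(l)}_{i,1},\dots,x^{(l)}_{i,n})\in F^n$ denotes its row of degree $l$. *)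

theory Defs
  imports "HOL-Computational_Algebra.Polynomial" "HOL-Combinatorics.Permutations"
begin

(* Conventions: all indices are 0-based.  A point of A^{mnk} is a function
   x :: nat => nat => nat => 'a, x i j l = x^{(l)}_{i,j}, required to vanish
   outside i<m, j<n, l<k (so that it is determined by its mnk coordinates). *)

definition alg_closed :: "'a::field itself \<Rightarrow> bool" where
  "alg_closed _ \<longleftrightarrow> (\<forall>p::'a poly. degree p > 0 \<longrightarrow> (\<exists>x. poly p x = 0))"

definition incr :: "nat \<Rightarrow> nat \<Rightarrow> (nat \<Rightarrow> nat) \<Rightarrow> bool" where
  "incr p n I \<longleftrightarrow> (\<forall>a<p. I a < n) \<and> (\<forall>a b. a < b \<and> b < p \<longrightarrow> I a < I b)"

definition pdet :: "nat \<Rightarrow> (nat \<Rightarrow> nat \<Rightarrow> 'b::comm_ring_1) \<Rightarrow> (nat \<Rightarrow> nat) \<Rightarrow> 'b" where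
  "pdet p M I = (\<Sum>\<sigma> | \<sigma> permutes {..<p}. of_int (sign \<sigma>) * (\<Prod>a<p. M a (I (\<sigma> a))))"

(* Coordinate of v_0 \<and> ... \<and> v_{p-1} (v a i = i-th component of v_a) on the basis
   vector e_{I 0} \<and> ... \<and> e_{I (p-1)} of \<and>^p F^n (I strictly increasing). *)
definition wedge :: "nat \<Rightarrow> (nat \<Rightarrow> nat \<Rightarrow> 'a::field) \<Rightarrow> (nat \<Rightarrow> nat) \<Rightarrow> 'a" where
  "wedge p v I = pdet p v I"

definition tuples :: "nat \<Rightarrow> nat \<Rightarrow> nat \<Rightarrow> (nat \<Rightarrow> nat) set" where
  "tuples p k w = {l. (\<forall>a<p. l a < k) \<and> (\<forall>a. p \<le> a \<longrightarrow> l a = 0) \<and> (\<Sum>a<p. l a) = w}"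

(* I-coordinate of  sum_{l in tuples} u_{J 0}^{(l_0)} \<and> ... \<and> u_{J(p-1)}^{(l_{p-1})},
   where U j l i = i-th component of u_j^{(l)} *)
definition wedge_sum :: "nat \<Rightarrow> nat \<Rightarrow> (nat \<Rightarrow> nat \<Rightarrow> nat \<Rightarrow> 'a::field) \<Rightarrow> (nat \<Rightarrow> nat) \<Rightarrow> nat \<Rightarrow> (nat \<Rightarrow> nat) \<Rightarrow> 'a" where
  "wedge_sum p k U J w I = (\<Sum>l\<in>tuples p k w. wedge p (\<lambda>a i. U (J a) (l a) i) I)"

(* polynomial vector u_j = sum_{l<k} u_j^{(l)} t^l, i-th component *)
definition upoly :: "nat \<Rightarrow> (nat \<Rightarrow> nat \<Rightarrow> nat \<Rightarrow> 'a::field) \<Rightarrow> nat \<Rightarrow> nat \<Rightarrow> 'a poly" where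
  "upoly k U j i = (\<Sum>l<k. monom (U j l i) l)"

(* all r-fold wedge products u_{J 0} \<and> ... \<and> u_{J(r-1)} (J strictly increasing, < m)
   vanish modulo t^k: every coordinate (an r x r minor) has zero coefficients of t^w, w<k *)
definition wedges_vanish :: "nat \<Rightarrow> nat \<Rightarrow> nat \<Rightarrow> nat \<Rightarrow> (nat \<Rightarrow> nat \<Rightarrow> nat \<Rightarrow> 'a::field) \<Rightarrow> bool" where
  "wedges_vanish r m n k U \<longleftrightarrow>
     (\<forall>J I. incr r m J \<and> incr r n I \<longrightarrow>
        (\<forall>w<k. coeff (pdet r (\<lambda>a i. upoly k U (J a) i) I) w = 0))"

definition aff :: "nat \<Rightarrow> nat \<Rightarrow> nat \<Rightarrow> (nat \<Rightarrow> nat \<Rightarrow> nat \<Rightarrow> 'a::field) set" where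
  "aff m n k = {x. \<forall>i j l. \<not> (i < m \<and> j < n \<and> l < k) \<longrightarrow> x i j l = 0}"

(* Z^{m,n}_{r,k}: coefficients of t^l (l<k) of all r x r minors of X(t) vanish.
   Row i of X(t) has entries x_{i,j}(t) = upoly k (\<lambda>i l j. x i j l) i j. *)
definition Zset :: "nat \<Rightarrow> nat \<Rightarrow> nat \<Rightarrow> nat \<Rightarrow> (nat \<Rightarrow> nat \<Rightarrow> nat \<Rightarrow> 'a::field) set" where
  "Zset m n r k = {x \<in> aff m n k. wedges_vanish r m n k (\<lambda>i l j. x i j l)}"

inductive_set polyfun :: "((nat \<Rightarrow> nat \<Rightarrow> nat \<Rightarrow> 'a::field) \<Rightarrow> 'a) set" where
  pf_const: "(\<lambda>x. c) \<in> polyfun"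
| pf_var: "(\<lambda>x. x i j l) \<in> polyfun"
| pf_add: "f \<in> polyfun \<Longrightarrow> g \<in> polyfun \<Longrightarrow> (\<lambda>x. f x + g x) \<in> polyfun"
| pf_mult: "f \<in> polyfun \<Longrightarrow> g \<in> polyfun \<Longrightarrow> (\<lambda>x. f x * g x) \<in> polyfun"

definition zariski_closure :: "(nat \<Rightarrow> nat \<Rightarrow> nat \<Rightarrow> 'a::field) set \<Rightarrow> (nat \<Rightarrow> nat \<Rightarrow> nat \<Rightarrow> 'a) set \<Rightarrow> (nat \<Rightarrow> nat \<Rightarrow> nat \<Rightarrow> 'a) set" where
  "zariski_closure Y S = {x \<in> Y. \<forall>f\<in>polyfun. (\<forall>y\<in>S. f y = 0) \<longrightarrow> f x = 0}"

definition Z0 :: "nat \<Rightarrow> nat \<Rightarrow> nat \<Rightarrow> (nat \<Rightarrow> nat \<Rightarrow> nat \<Rightarrow> 'a::field) set" where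
  "Z0 m n k = zariski_closure (Zset m n 2 k) {x \<in> Zset m n 2 k. \<exists>i<m. \<exists>j<n. x i j 0 \<noteq> 0}"

end

theory Submission
  imports Defs "Jordan_Normal_Form.Determinant" "HOL-Combinatorics.List_Permutation"
begin


lemma pdet_det: "pdet p M I = det (mat p p (\<lambda>(a,b). M a (I b)))"
proof -
  have "det (mat p p (\<lambda>(a,b). M a (I b))) =
    (\<Sum>\<sigma> | \<sigma> permutes {0..<p}. of_int (sign \<sigma>) * (\<Prod>a=0..<p. mat p p (\<lambda>(a,b). M a (I b)) $$ (a, \<sigma> a)))"
    by (rule det_def') simp
  also have "\<dots> = pdet p M I"
    unfolding pdet_def atLeast0LessThan
  proof (intro sum.cong refl arg_cong2[where f="(*)"] prod.cong)
    fix \<sigma> a assume "\<sigma> \<in> {\<sigma>. \<sigma> permutes {..<p}}" "a \<in> {..<p}"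
    hence "\<sigma> a < p" "a < p" using permutes_in_image[of \<sigma> "{..<p}" a] by auto
    thus "mat p p (\<lambda>(a,b). M a (I b)) $$ (a, \<sigma> a) = M a (I (\<sigma> a))" by simp
  qed
  finally show ?thesis by simp
qed

lemma det_zero_last_row:
  assumes "A \<in> carrier_mat p p" "0 < p" "\<And>c. c < p \<Longrightarrow> A $$ (p-1, c) = 0"
  shows "det A = 0"
proof -
  have "det A = (\<Sum>\<sigma> | \<sigma> permutes {0..<p}. of_int (sign \<sigma>) * (\<Prod>a=0..<p. A $$ (a, \<sigma> a)))"
    by (rule det_def'[OF assms(1)])
  also have "\<dots> = 0"
  proof (intro sum.neutral ballI)
    fix \<sigma> assume "\<sigma> \<in> {\<sigma>. \<sigma> permutes {0..<p}}"
    hence "\<sigma> (p-1) < p" using assms(2) by (auto simp: permutes_in_image)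
    hence "(\<Prod>a=0..<p. A $$ (a, \<sigma> a)) = 0" using assms
      by (intro prod_zero) (auto intro!: bexI[where x="p-1"])
    thus "of_int (sign \<sigma>) * (\<Prod>a=0..<p. A $$ (a, \<sigma> a)) = 0" by simp
  qed
  finally show ?thesis .
qed

lemma det_span_zero:
  fixes C V :: "nat \<Rightarrow> nat \<Rightarrow> 'b::comm_ring_1"
  assumes p: "0 < p"
  shows "det (mat p p (\<lambda>(a,c). \<Sum>i<p-1. C a i * V i c)) = 0"
proof -
  let ?C = "mat p p (\<lambda>(a,i). if i < p-1 then C a i else 0)"
  let ?V = "mat p p (\<lambda>(i,c). if i < p-1 then V i c else 0)"
  have eq: "mat p p (\<lambda>(a,c). \<Sum>i<p-1. C a i * V i c) = ?C * ?V"
  proof (rule eq_matI)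
    fix a c assume ac: "a < dim_row (?C * ?V)" "c < dim_col (?C * ?V)"
    hence "(?C * ?V) $$ (a,c) = (\<Sum>i=0..<p. (if i < p-1 then C a i else 0) * (if i < p-1 then V i c else 0))"
      by (simp add: scalar_prod_def)
    also have "\<dots> = (\<Sum>i\<in>{0..<p} \<inter> {i. i < p-1}. C a i * V i c)"
      by (subst sum.inter_restrict) (auto intro!: sum.cong)
    also have "{0..<p} \<inter> {i. i < p-1} = {..<p-1}" by auto
    finally show "mat p p (\<lambda>(a,c). \<Sum>i<p-1. C a i * V i c) $$ (a,c) = (?C * ?V) $$ (a,c)"
      using ac by simp
  qed auto
  have "det ?V = 0" by (rule det_zero_last_row[OF _ p]) auto
  thus ?thesis unfolding eq by (subst det_mult[of _ p]) auto
qed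



lemma prod_mod_s2:
  fixes x y :: "nat \<Rightarrow> 'b::comm_ring_1"
  assumes "finite A"
  shows "s^2 dvd ((\<Prod>a\<in>A. x a + s * y a) - (\<Prod>a\<in>A. x a) - s * (\<Sum>b\<in>A. y b * (\<Prod>a\<in>A-{b}. x a)))"
  using assms
proof (induction A rule: finite_induct)
  case empty
  then show ?case by simp
next
  case (insert c A)
  define P where "P = (\<Prod>a\<in>A. x a + s * y a)"
  define X where "X = (\<Prod>a\<in>A. x a)"
  define Z where "Z = (\<Sum>b\<in>A. y b * (\<Prod>a\<in>A-{b}. x a))"
  from insert.IH obtain W where W: "P - X - s * Z = s^2 * W"
    unfolding P_def X_def Z_def by (auto elim: dvdE)
  have Z': "(\<Sum>b\<in>insert c A. y b * (\<Prod>a\<in>insert c A-{b}. x a)) = y c * X + x c * Z"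
  proof -
    have "(\<Sum>b\<in>insert c A. y b * (\<Prod>a\<in>insert c A-{b}. x a)) =
          y c * (\<Prod>a\<in>insert c A-{c}. x a) + (\<Sum>b\<in>A. y b * (\<Prod>a\<in>insert c A-{b}. x a))"
      using insert by simp
    also have "(\<Prod>a\<in>insert c A-{c}. x a) = X" unfolding X_def using insert
      by (intro prod.cong) auto
    also have "(\<Sum>b\<in>A. y b * (\<Prod>a\<in>insert c A-{b}. x a)) = (\<Sum>b\<in>A. x c * (y b * (\<Prod>a\<in>A-{b}. x a)))"
    proof (intro sum.cong refl)
      fix b assume "b \<in> A"
      hence "insert c A - {b} = insert c (A - {b})" using insert by auto
      thus "y b * (\<Prod>a\<in>insert c A-{b}. x a) = x c * (y b * (\<Prod>a\<in>A-{b}. x a))"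
        using insert by simp
    qed
    also have "\<dots> = x c * Z" unfolding Z_def by (simp add: sum_distrib_left)
    finally show ?thesis .
  qed
  have "(\<Prod>a\<in>insert c A. x a + s * y a) - (\<Prod>a\<in>insert c A. x a) - s * (\<Sum>b\<in>insert c A. y b * (\<Prod>a\<in>insert c A-{b}. x a))
      = (x c + s * y c) * P - x c * X - s * (y c * X + x c * Z)"
    using insert unfolding Z' P_def X_def by simp
  also have "\<dots> = x c * (P - X - s * Z) + s * y c * (P - X)" by (simp add: algebra_simps)
  also have PX: "P - X = s * Z + s^2 * W" using W by (simp add: algebra_simps)
  have "x c * (P - X - s * Z) + s * y c * (P - X) = x c * (s^2 * W) + s * y c * (s * Z + s^2 * W)"
    by (subst W, subst PX, rule refl)
  also have "\<dots> = s^2 * (x c * W + y c * Z + s * y c * W)"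
    by (simp add: algebra_simps power2_eq_square)
  finally show ?case by simp
qed

lemma pdet_mod_s2:
  fixes X Y :: "nat \<Rightarrow> nat \<Rightarrow> 'b::comm_ring_1"
  shows "s^2 dvd (pdet p (\<lambda>a c. X a c + s * Y a c) id - pdet p X id
            - s * (\<Sum>b<p. pdet p (\<lambda>a c. if a = b then Y a c else X a c) id))"
proof -
  let ?P = "{\<sigma>. \<sigma> permutes {..<p}}"
  have rep: "pdet p (\<lambda>a c. if a = b then Y a c else X a c) id =
     (\<Sum>\<sigma>\<in>?P. of_int (sign \<sigma>) * (Y b (\<sigma> b) * (\<Prod>a\<in>{..<p}-{b}. X a (\<sigma> a))))" if "b < p" for b
    unfolding pdet_def id_apply
  proof (intro sum.cong refl arg_cong2[where f="(*)"])
    fix \<sigma>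
    have "(\<Prod>a<p. (if a = b then Y a (\<sigma> a) else X a (\<sigma> a))) =
      (if b = b then Y b (\<sigma> b) else X b (\<sigma> b)) * (\<Prod>a\<in>{..<p}-{b}. (if a = b then Y a (\<sigma> a) else X a (\<sigma> a)))"
      using that by (subst prod.remove[of _ b]) auto
    also have "(\<Prod>a\<in>{..<p}-{b}. (if a = b then Y a (\<sigma> a) else X a (\<sigma> a))) = (\<Prod>a\<in>{..<p}-{b}. X a (\<sigma> a))"
      by (intro prod.cong) auto
    finally show "(\<Prod>a<p. (if a = b then Y a (\<sigma> a) else X a (\<sigma> a))) = Y b (\<sigma> b) * (\<Prod>a\<in>{..<p}-{b}. X a (\<sigma> a))" by simp
  qed
  have sumrep: "(\<Sum>b<p. pdet p (\<lambda>a c. if a = b then Y a c else X a c) id) =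
     (\<Sum>\<sigma>\<in>?P. of_int (sign \<sigma>) * (\<Sum>b<p. Y b (\<sigma> b) * (\<Prod>a\<in>{..<p}-{b}. X a (\<sigma> a))))"
  proof -
    have "(\<Sum>b<p. pdet p (\<lambda>a c. if a = b then Y a c else X a c) id) =
      (\<Sum>b<p. \<Sum>\<sigma>\<in>?P. of_int (sign \<sigma>) * (Y b (\<sigma> b) * (\<Prod>a\<in>{..<p}-{b}. X a (\<sigma> a))))"
      by (intro sum.cong refl rep) simp
    also have "\<dots> = (\<Sum>\<sigma>\<in>?P. \<Sum>b<p. of_int (sign \<sigma>) * (Y b (\<sigma> b) * (\<Prod>a\<in>{..<p}-{b}. X a (\<sigma> a))))"
      by (rule sum.swap)
    finally show ?thesis by (simp add: sum_distrib_left)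
  qed
  have "pdet p (\<lambda>a c. X a c + s * Y a c) id - pdet p X id
            - s * (\<Sum>b<p. pdet p (\<lambda>a c. if a = b then Y a c else X a c) id) =
        (\<Sum>\<sigma>\<in>?P. of_int (sign \<sigma>) * ((\<Prod>a<p. X a (\<sigma> a) + s * Y a (\<sigma> a)) - (\<Prod>a<p. X a (\<sigma> a))
              - s * (\<Sum>b<p. Y b (\<sigma> b) * (\<Prod>a\<in>{..<p}-{b}. X a (\<sigma> a)))))"
    unfolding sumrep by (simp add: pdet_def sum_subtractf sum_distrib_left algebra_simps sum.distrib)
  also have "s^2 dvd \<dots>"
    by (intro dvd_sum dvd_mult prod_mod_s2) auto
  finally show ?thesis .
qed



lemma span_zero:
  fixes C V M :: "nat \<Rightarrow> nat \<Rightarrow> 'b::comm_ring_1"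
  assumes qp: "q < p" and M: "\<And>a c. a < p \<Longrightarrow> c < p \<Longrightarrow> M a c = (\<Sum>i<q. C a i * V i c)"
  shows "pdet p M id = 0"
proof -
  let ?C = "\<lambda>a i. if i < q then C a i else 0"
  have "mat p p (\<lambda>(a,b). M a (id b)) = mat p p (\<lambda>(a,c). \<Sum>i<p-1. ?C a i * V i c)"
  proof (rule eq_matI)
    fix a c assume ac: "a < dim_row (mat p p (\<lambda>(a,c). \<Sum>i<p-1. ?C a i * V i c))"
         "c < dim_col (mat p p (\<lambda>(a,c). \<Sum>i<p-1. ?C a i * V i c))"
    have "(\<Sum>i<p-1. ?C a i * V i c) = (\<Sum>i\<in>{..<p-1} \<inter> {i. i < q}. C a i * V i c)"
      by (subst sum.inter_restrict) (auto intro!: sum.cong)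
    also have "{..<p-1} \<inter> {i. i < q} = {..<q}" using qp by auto
    finally show "mat p p (\<lambda>(a,b). M a (id b)) $$ (a,c) = mat p p (\<lambda>(a,c). \<Sum>i<p-1. ?C a i * V i c) $$ (a,c)"
      using ac M by simp
  qed auto
  thus ?thesis using det_span_zero[of p ?C V] qp by (simp add: pdet_det)
qed

lemma span_mod_s2:
  fixes C V Q :: "nat \<Rightarrow> nat \<Rightarrow> 'b::comm_ring_1"
  assumes qp: "q + 2 \<le> p"
  shows "s^2 dvd pdet p (\<lambda>a c. (\<Sum>i<q. C a i * V i c) + s * Q a c) id"
proof -
  let ?X = "\<lambda>a c. \<Sum>i<q. C a i * V i c"
  have X0: "pdet p ?X id = 0" by (rule span_zero[of q]) (use qp in auto)
  have R0: "pdet p (\<lambda>a c. if a = b then Q a c else ?X a c) id = 0" for b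
  proof (rule span_zero[of "Suc q" _ _ "\<lambda>a i. if a = b then (if i = q then 1 else 0) else (if i < q then C a i else 0)"
       "\<lambda>i c. if i = q then Q b c else V i c"])
    show "Suc q < p" using qp by simp
    fix a c
    show "(if a = b then Q a c else ?X a c) =
      (\<Sum>i<Suc q. (if a = b then (if i = q then 1 else 0) else (if i < q then C a i else 0)) *
          (if i = q then Q b c else V i c))"
      by (auto intro!: sum.cong sum.neutral)
  qed
  show ?thesis using pdet_mod_s2[of s p ?X Q] by (simp add: X0 R0)
qed



definition bmat :: "(nat \<Rightarrow> nat \<Rightarrow> 'b::comm_ring_1) \<Rightarrow> nat \<Rightarrow> (nat \<Rightarrow> nat) \<Rightarrow> (nat \<Rightarrow> nat) \<Rightarrow> nat \<Rightarrow> nat \<Rightarrow> 'b mat" where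
  "bmat u q R0 I0 j c = mat (Suc q) (Suc q) (\<lambda>(a,b). u (if a < q then R0 a else j) (if b < q then I0 b else c))"

lemma mat_delete_bmat:
  assumes "i < Suc q"
  shows "mat_delete (bmat u q R0 I0 j c) i q = mat_delete (bmat u q R0 I0 j 0) i q"
  by (rule eq_matI) (use assms in \<open>auto simp: mat_delete_def bmat_def\<close>)

lemma mat_delete_bmat_last:
  "mat_delete (bmat u q R0 I0 j c) q q = mat q q (\<lambda>(a,b). u (R0 a) (I0 b))"
  by (rule eq_matI) (auto simp: mat_delete_def bmat_def)

lemma bordered:
  fixes u :: "nat \<Rightarrow> nat \<Rightarrow> 'b::comm_ring_1"
  shows "pdet (Suc q) (\<lambda>a. u (if a < q then R0 a else j)) (\<lambda>b. if b < q then I0 b else c) =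
    pdet q (\<lambda>a. u (R0 a)) I0 * u j c + (\<Sum>i<q. cofactor (bmat u q R0 I0 j 0) i q * u (R0 i) c)"
proof -
  let ?A = "bmat u q R0 I0 j c"
  have "pdet (Suc q) (\<lambda>a. u (if a < q then R0 a else j)) (\<lambda>b. if b < q then I0 b else c) = det ?A"
    unfolding pdet_det bmat_def
    by (intro arg_cong[where f=det] eq_matI) auto
  also have "\<dots> = (\<Sum>i<Suc q. ?A $$ (i,q) * cofactor ?A i q)"
    by (rule laplace_expansion_column) (auto simp: bmat_def)
  also have "\<dots> = (\<Sum>i<q. ?A $$ (i,q) * cofactor ?A i q) + ?A $$ (q,q) * cofactor ?A q q"
    by simp
  also have "(\<Sum>i<q. ?A $$ (i,q) * cofactor ?A i q) = (\<Sum>i<q. cofactor (bmat u q R0 I0 j 0) i q * u (R0 i) c)"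
  proof (intro sum.cong refl)
    fix i assume i: "i \<in> {..<q}"
    hence "cofactor ?A i q = cofactor (bmat u q R0 I0 j 0) i q"
      unfolding cofactor_def by (subst mat_delete_bmat) auto
    moreover have "?A $$ (i,q) = u (R0 i) c" using i by (simp add: bmat_def)
    ultimately show "?A $$ (i,q) * cofactor ?A i q = cofactor (bmat u q R0 I0 j 0) i q * u (R0 i) c"
      by simp
  qed
  also have "?A $$ (q,q) * cofactor ?A q q = pdet q (\<lambda>a. u (R0 a)) I0 * u j c"
  proof -
    have "cofactor ?A q q = pdet q (\<lambda>a. u (R0 a)) I0"
      unfolding cofactor_def mat_delete_bmat_last pdet_det by simp
    moreover have "?A $$ (q,q) = u j c" by (simp add: bmat_def)
    ultimately show ?thesis by (simp add: mult.commute)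
  qed
  finally show ?thesis by (simp add: add.commute)
qed



lemma pdet_scale:
  fixes M M' :: "nat \<Rightarrow> nat \<Rightarrow> 'b::comm_ring_1"
  assumes "\<And>a c. a < p \<Longrightarrow> c < p \<Longrightarrow> M a c = d * M' a c"
  shows "pdet p M id = d^p * pdet p M' id"
  unfolding pdet_def sum_distrib_left id_apply
proof (intro sum.cong refl)
  fix \<sigma> assume "\<sigma> \<in> {\<sigma>. \<sigma> permutes {..<p}}"
  hence s: "a < p \<Longrightarrow> \<sigma> a < p" for a using permutes_in_image[of \<sigma> "{..<p}" a] by auto
  have "(\<Prod>a<p. M a (\<sigma> a)) = (\<Prod>a<p. d * M' a (\<sigma> a))"
    by (intro prod.cong refl) (use s assms in auto)
  also have "\<dots> = d^p * (\<Prod>a<p. M' a (\<sigma> a))" by (simp add: prod.distrib)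
  finally show "of_int (sign \<sigma>) * (\<Prod>a<p. M a (\<sigma> a)) = d ^ p * (of_int (sign \<sigma>) * (\<Prod>a<p. M' a (\<sigma> a)))"
    by simp
qed

lemma pdet_id: "pdet p (\<lambda>a. u (J a)) I = pdet p (\<lambda>a c. u (J a) (I c)) id"
  unfolding pdet_def by simp

lemma core:
  fixes u :: "nat \<Rightarrow> nat \<Rightarrow> 'b::comm_ring_1"
  assumes H: "\<And>j c. j < m \<Longrightarrow> c < n \<Longrightarrow>
      s dvd pdet (Suc q) (\<lambda>a. u (if a < q then R0 a else j)) (\<lambda>b. if b < q then I0 b else c)"
    and J: "\<And>a. a < q + 2 \<Longrightarrow> J a < m" and I: "\<And>b. b < q + 2 \<Longrightarrow> I b < n"
  shows "s^2 dvd pdet q (\<lambda>a. u (R0 a)) I0 ^ (q+2) * pdet (q+2) (\<lambda>a. u (J a)) I"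
proof -
  define \<delta> where "\<delta> = pdet q (\<lambda>a. u (R0 a)) I0"
  define \<gamma> where "\<gamma> j i = cofactor (bmat u q R0 I0 j 0) i q" for j i
  define B where "B j c = pdet (Suc q) (\<lambda>a. u (if a < q then R0 a else j)) (\<lambda>b. if b < q then I0 b else c)" for j c
  define Q where "Q j c = (SOME z. B j c = s * z)" for j c
  have BQ: "B j c = s * Q j c" if "j < m" "c < n" for j c
  proof -
    from H[OF that] obtain z where "B j c = s * z" unfolding B_def by (auto elim!: dvdE)
    thus ?thesis unfolding Q_def by (rule someI)
  qed
  have bor: "\<delta> * u j c = (\<Sum>i<q. (- \<gamma> j i) * u (R0 i) c) + B j c" for j c
    using bordered[of q u R0 j I0 c] unfolding \<delta>_def \<gamma>_def B_def
    by (simp add: sum_negf)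
  have "s^2 dvd pdet (q+2) (\<lambda>a c. (\<Sum>i<q. (- \<gamma> (J a) i) * u (R0 i) (I c)) + s * Q (J a) (I c)) id"
    by (rule span_mod_s2) simp
  also have "pdet (q+2) (\<lambda>a c. (\<Sum>i<q. (- \<gamma> (J a) i) * u (R0 i) (I c)) + s * Q (J a) (I c)) id
     = \<delta>^(q+2) * pdet (q+2) (\<lambda>a c. u (J a) (I c)) id"
    by (rule pdet_scale) (simp add: bor BQ J I)
  finally show ?thesis unfolding \<delta>_def pdet_id .
qed



lemma pdet_transpose: "pdet r M C = pdet r (\<lambda>b a. M a (C b)) id"
proof -
  have "pdet r M C = det (transpose_mat (mat r r (\<lambda>(a,b). M a (C b))))"
    by (simp add: pdet_det det_transpose[of _ r])
  also have "transpose_mat (mat r r (\<lambda>(a,b). M a (C b))) = mat r r (\<lambda>(b,a). (\<lambda>b a. M a (C b)) b (id a))"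
    by (rule eq_matI) auto
  finally show ?thesis by (simp add: pdet_det)
qed

lemma pdet_rows_perm:
  assumes "\<pi> permutes {..<r}"
  shows "pdet r (\<lambda>a. M (\<pi> a)) C = of_int (sign \<pi>) * pdet r M C"
proof -
  have p: "\<pi> permutes {0..<r}" using assms by (simp add: atLeast0LessThan)
  have pa: "a < r \<Longrightarrow> \<pi> a < r" for a using permutes_in_image[OF assms, of a] by auto
  have "mat r r (\<lambda>(a,b). M (\<pi> a) (C b)) = mat r r (\<lambda>(i,j). mat r r (\<lambda>(a,b). M a (C b)) $$ (\<pi> i, j))"
    by (rule eq_matI) (auto simp: pa)
  thus ?thesis using det_permute_rows[OF _ p, of "mat r r (\<lambda>(a,b). M a (C b))"]
    by (simp add: pdet_det)
qed

lemma pdet_cols_perm: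
  assumes "\<pi> permutes {..<r}"
  shows "pdet r M (\<lambda>b. C (\<pi> b)) = of_int (sign \<pi>) * pdet r M C"
  using pdet_rows_perm[OF assms, of "\<lambda>b a. M a (C b)" id]
  by (subst (1 2) pdet_transpose) simp

lemma pdet_rows_eq:
  assumes "a < r" "a' < r" "a \<noteq> a'" "R a = R a'"
  shows "pdet r (\<lambda>a. M (R a)) C = 0"
  unfolding pdet_det
  by (rule det_identical_rows[of _ r a a']) (use assms in \<open>auto intro!: eq_vecI\<close>)

lemma pdet_cols_eq:
  assumes "a < r" "a' < r" "a \<noteq> a'" "C a = C a'"
  shows "pdet r M C = 0"
  by (subst pdet_transpose, rule pdet_rows_eq[of a r a' C "\<lambda>c a. M a c"]) (use assms in auto)

lemma sort_perm:
  fixes R :: "nat \<Rightarrow> nat"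
  assumes inj: "inj_on R {..<r}"
  shows "\<exists>\<pi>. \<pi> permutes {..<r} \<and> (\<forall>a b. a < b \<and> b < r \<longrightarrow> R (\<pi> a) < R (\<pi> b))"
proof -
  define xs where "xs = map R [0..<r]"
  define ys where "ys = sort xs"
  have "mset ys = mset xs" unfolding ys_def by simp
  from permutation_Ex_bij[OF this] obtain f where
    f: "bij_betw f {..<length ys} {..<length xs}" "\<forall>i<length ys. ys ! i = xs ! f i" by blast
  have len: "length xs = r" "length ys = r" unfolding xs_def ys_def by auto
  define \<pi> where "\<pi> a = (if a < r then f a else a)" for a
  have "bij_betw \<pi> {..<r} {..<r}"
    using f(1) unfolding len by (rule bij_betw_cong[THEN iffD1, rotated]) (auto simp: \<pi>_def)
  hence perm: "\<pi> permutes {..<r}" by (rule bij_imp_permutes) (auto simp: \<pi>_def)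
  have dist: "distinct xs" unfolding xs_def using inj by (simp add: distinct_map atLeast0LessThan)
  have "sorted ys" "distinct ys" unfolding ys_def using dist by auto
  hence sw: "sorted_wrt (<) ys" by (simp add: strict_sorted_iff)
  have yR: "ys ! a = R (\<pi> a)" if "a < r" for a
  proof -
    have "f a < r" using f(1) that len by (auto simp: bij_betw_def)
    thus ?thesis using f(2) that len by (simp add: \<pi>_def xs_def)
  qed
  have "R (\<pi> a) < R (\<pi> b)" if "a < b" "b < r" for a b
    using sorted_wrt_nth_less[OF sw, of a b] that len yR[of a] yR[of b] by simp
  thus ?thesis using perm by blast
qed

lemma sign_sq: "(of_int (sign \<pi>) :: 'b::comm_ring_1) * of_int (sign \<pi>) = 1"
  by (simp add: sign_def)


lemma minor_dvd:
  fixes M :: "nat \<Rightarrow> nat \<Rightarrow> 'b::comm_ring_1"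
  assumes H: "\<And>R C. incr r m R \<Longrightarrow> incr r n C \<Longrightarrow> s dvd pdet r (\<lambda>a. M (R a)) C"
    and R: "\<And>a. a < r \<Longrightarrow> R a < m" and C: "\<And>a. a < r \<Longrightarrow> C a < n"
  shows "s dvd pdet r (\<lambda>a. M (R a)) C"
proof (cases "inj_on R {..<r} \<and> inj_on C {..<r}")
  case False
  hence "\<not> inj_on R {..<r} \<or> \<not> inj_on C {..<r}" by blast
  then show ?thesis
  proof (elim disjE)
    assume "\<not> inj_on R {..<r}"
    then obtain a a' where "a < r" "a' < r" "a \<noteq> a'" "R a = R a'" unfolding inj_on_def by auto
    hence "pdet r (\<lambda>a. M (R a)) C = 0" by (intro pdet_rows_eq[of a r a'])
    thus ?thesis by simp
  next
    assume "\<not> inj_on C {..<r}"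
    then obtain a a' where "a < r" "a' < r" "a \<noteq> a'" "C a = C a'" unfolding inj_on_def by auto
    hence "pdet r (\<lambda>a. M (R a)) C = 0" by (intro pdet_cols_eq[of a r a'])
    thus ?thesis by simp
  qed
next
  case True
  then obtain \<pi> \<rho> where \<pi>: "\<pi> permutes {..<r}" "\<forall>a b. a < b \<and> b < r \<longrightarrow> R (\<pi> a) < R (\<pi> b)"
    and \<rho>: "\<rho> permutes {..<r}" "\<forall>a b. a < b \<and> b < r \<longrightarrow> C (\<rho> a) < C (\<rho> b)"
    using sort_perm[of R r] sort_perm[of C r] by auto
  have pa: "a < r \<Longrightarrow> \<pi> a < r" "a < r \<Longrightarrow> \<rho> a < r" for a
    using permutes_in_image[OF \<pi>(1), of a] permutes_in_image[OF \<rho>(1), of a] by auto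
  have "incr r m (\<lambda>a. R (\<pi> a))" "incr r n (\<lambda>a. C (\<rho> a))"
    unfolding incr_def using \<pi> \<rho> pa R C by auto
  from H[OF this] have "s dvd pdet r (\<lambda>a. M (R (\<pi> a))) (\<lambda>a. C (\<rho> a))" .
  also have "pdet r (\<lambda>a. M (R (\<pi> a))) (\<lambda>a. C (\<rho> a)) = of_int (sign \<pi>) * (of_int (sign \<rho>) * pdet r (\<lambda>a. M (R a)) C)"
    by (simp add: pdet_rows_perm[OF \<pi>(1), of "\<lambda>a. M (R a)"] pdet_cols_perm[OF \<rho>(1)])
  finally have h: "s dvd of_int (sign \<pi>) * (of_int (sign \<rho>) * pdet r (\<lambda>a. M (R a)) C)" .
  have "s dvd of_int (sign \<rho>) * (of_int (sign \<pi>) * (of_int (sign \<pi>) * (of_int (sign \<rho>) * pdet r (\<lambda>a. M (R a)) C)))"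
    by (rule dvd_mult, rule dvd_mult, rule h)
  thus ?thesis by (simp add: mult.assoc[symmetric] sign_sq)
qed



lemma poly_pdet: "poly (pdet p M I) x = pdet p (\<lambda>a i. poly (M a i) x) I"
  unfolding pdet_def by (simp add: poly_sum poly_prod)

lemma poly_upoly0: "1 \<le> k \<Longrightarrow> poly (upoly k U j i) 0 = U j 0 i"
  unfolding upoly_def poly_sum poly_monom
  by (cases k) (simp_all add: sum.lessThan_Suc_shift del: sum.lessThan_Suc)

lemma prod_monom: "(\<Prod>a\<in>A. monom (c a) (n a)) = monom (\<Prod>a\<in>A. c a) (\<Sum>a\<in>A. n a)"
  by (induction A rule: infinite_finite_induct) (auto simp: mult_monom)

lemma coeff_of_int_mult: "coeff (of_int z * q) n = of_int z * coeff q n"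
  by (simp add: of_int_poly)

lemma wedge_sum_coeff:
  "wedge_sum p k U J w I = coeff (pdet p (\<lambda>a i. upoly k U (J a) i) I) w"
proof -
  let ?PI = "PiE {..<p} (\<lambda>_. {..<k::nat})"
  let ?G = "{g \<in> ?PI. (\<Sum>a<p. g a) = w}"
  let ?P = "{\<sigma>. \<sigma> permutes {..<p}}"
  let ?F = "\<lambda>\<sigma> g. (\<Prod>a<p. U (J a) (g a) (I (\<sigma> a)))"
  have "wedge_sum p k U J w I = (\<Sum>g\<in>?G. \<Sum>\<sigma>\<in>?P. of_int (sign \<sigma>) * ?F \<sigma> g)"
    unfolding wedge_sum_def wedge_def pdet_def
  proof (rule sum.reindex_bij_witness[of _ "\<lambda>g a. if a < p then g a else 0" "\<lambda>l. restrict l {..<p}"])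
    fix l assume "l \<in> tuples p k w"
    thus "(\<lambda>a. if a < p then restrict l {..<p} a else 0) = l" "restrict l {..<p} \<in> ?G"
      unfolding tuples_def by (auto intro!: ext)
  next
    fix g assume g: "g \<in> ?G"
    thus "restrict (\<lambda>a. if a < p then g a else 0) {..<p} = g"
      by (auto intro!: ext simp: PiE_def extensional_def)
    show "(\<lambda>a. if a < p then g a else 0) \<in> tuples p k w"
      using g unfolding tuples_def by (auto simp: PiE_def Pi_def)
  next
    fix l assume "l \<in> tuples p k w"
    show "(\<Sum>\<sigma>\<in>?P. of_int (sign \<sigma>) * ?F \<sigma> (restrict l {..<p})) =
          (\<Sum>\<sigma>\<in>?P. of_int (sign \<sigma>) * (\<Prod>a<p. U (J a) (l a) (I (\<sigma> a))))"
      by (intro sum.cong refl arg_cong2[where f="(*)"] prod.cong) auto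
  qed
  also have "\<dots> = (\<Sum>\<sigma>\<in>?P. of_int (sign \<sigma>) * (\<Sum>g\<in>?G. ?F \<sigma> g))"
    by (subst sum.swap) (simp add: sum_distrib_left)
  also have "\<dots> = coeff (pdet p (\<lambda>a i. upoly k U (J a) i) I) w"
    unfolding pdet_def coeff_sum coeff_of_int_mult
  proof (intro sum.cong refl arg_cong2[where f="(*)"])
    fix \<sigma>
    have "(\<Prod>a<p. upoly k U (J a) (I (\<sigma> a))) = (\<Prod>a<p. \<Sum>l<k. monom (U (J a) l (I (\<sigma> a))) l)"
      unfolding upoly_def ..
    also have "\<dots> = (\<Sum>g\<in>?PI. \<Prod>a<p. monom (U (J a) (g a) (I (\<sigma> a))) (g a))"
      by (rule prod_sum_PiE) auto
    also have "\<dots> = (\<Sum>g\<in>?PI. monom (?F \<sigma> g) (\<Sum>a<p. g a))"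
      by (simp add: prod_monom)
    finally have "coeff (\<Prod>a<p. upoly k U (J a) (I (\<sigma> a))) w = (\<Sum>g\<in>?PI. if (\<Sum>a<p. g a) = w then ?F \<sigma> g else 0)"
      by (simp add: coeff_sum coeff_monom)
    also have "\<dots> = (\<Sum>g\<in>?G. ?F \<sigma> g)"
      by (rule sum.inter_filter[symmetric]) (simp add: finite_PiE)
    finally show "(\<Sum>g\<in>?G. ?F \<sigma> g) = coeff (\<Prod>a<p. upoly k U (J a) (I (\<sigma> a))) w" by simp
  qed
  finally show ?thesis .
qed



lemma monom_cancel:
  fixes e D :: "'a::field poly"
  assumes e: "poly e 0 \<noteq> 0" and d: "monom 1 N dvd e * D"
  shows "monom 1 N dvd D"
proof (cases "D = 0")
  case True thus ?thesis by simp
next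
  case False
  have "e \<noteq> 0" using e by auto
  hence ne: "e * D \<noteq> 0" using False by simp
  have "N \<le> order 0 (e * D)" using d ne by (simp add: monom_1_dvd_iff)
  also have "order 0 (e * D) = order 0 D" using ne by (simp add: order_mult order_0I[OF e])
  finally show ?thesis using False by (simp add: monom_1_dvd_iff)
qed

lemma main_poly:
  fixes U :: "nat \<Rightarrow> nat \<Rightarrow> nat \<Rightarrow> 'a::field"
  assumes wv: "wedges_vanish (Suc q) m n k U"
    and R0: "\<And>a. a < q \<Longrightarrow> R0 a < m" and I0: "\<And>b. b < q \<Longrightarrow> I0 b < n"
    and nz: "poly (pdet q (\<lambda>a i. upoly k U (R0 a) i) I0) 0 \<noteq> 0"
    and J: "\<And>a. a < q + 2 \<Longrightarrow> J a < m" and I: "\<And>b. b < q + 2 \<Longrightarrow> I b < n"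
    and w: "w < 2 * k"
  shows "wedge_sum (q+2) k U J w I = 0"
proof -
  define u where "u = upoly k U"
  define s :: "'a poly" where "s = monom 1 k"
  have H0: "s dvd pdet (Suc q) (\<lambda>a. u (R a)) C" if "incr (Suc q) m R" "incr (Suc q) n C" for R C
    using wv that unfolding wedges_vanish_def s_def u_def monom_1_dvd_iff' by blast
  have H: "s dvd pdet (Suc q) (\<lambda>a. u (if a < q then R0 a else j)) (\<lambda>b. if b < q then I0 b else c)"
    if "j < m" "c < n" for j c
    by (rule minor_dvd[OF H0, of m n]) (use that R0 I0 in auto)
  have "s^2 dvd pdet q (\<lambda>a. u (R0 a)) I0 ^ (q+2) * pdet (q+2) (\<lambda>a. u (J a)) I"
    by (rule core[OF H J I]) auto
  hence "monom 1 (2*k) dvd pdet q (\<lambda>a. u (R0 a)) I0 ^ (q+2) * pdet (q+2) (\<lambda>a. u (J a)) I"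
    by (simp add: s_def power2_eq_square mult_monom mult_2)
  hence "monom 1 (2*k) dvd pdet (q+2) (\<lambda>a. u (J a)) I"
    by (rule monom_cancel[rotated]) (use nz in \<open>simp add: u_def poly_power\<close>)
  hence "coeff (pdet (q+2) (\<lambda>a. u (J a)) I) w = 0" using w by (simp add: monom_1_dvd_iff')
  thus ?thesis by (simp add: wedge_sum_coeff u_def)
qed

lemma pf_sum: "(\<And>i. i \<in> A \<Longrightarrow> f i \<in> polyfun) \<Longrightarrow> (\<lambda>x. \<Sum>i\<in>A. f i x) \<in> polyfun"
proof (induction A rule: infinite_finite_induct)
  case (infinite A) thus ?case using polyfun.pf_const[of 0] by simp
next
  case empty thus ?case using polyfun.pf_const[of 0] by simp
next
  case (insert a A) thus ?case using polyfun.pf_add[of "f a" "\<lambda>x. \<Sum>i\<in>A. f i x"] by simp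
qed

lemma pf_prod: "(\<And>i. i \<in> A \<Longrightarrow> f i \<in> polyfun) \<Longrightarrow> (\<lambda>x. \<Prod>i\<in>A. f i x) \<in> polyfun"
proof (induction A rule: infinite_finite_induct)
  case (infinite A) thus ?case using polyfun.pf_const[of 1] by simp
next
  case empty thus ?case using polyfun.pf_const[of 1] by simp
next
  case (insert a A) thus ?case using polyfun.pf_mult[of "f a" "\<lambda>x. \<Prod>i\<in>A. f i x"] by simp
qed

lemma pf_wedge_sum: "(\<lambda>x. wedge_sum p k (\<lambda>i l j. x i j l) J w I) \<in> polyfun"
  unfolding wedge_sum_def wedge_def pdet_def
  by (intro pf_sum pf_prod polyfun.pf_mult polyfun.pf_const polyfun.pf_var)

lemma pdet_one: "pdet 1 M I = M 0 (I 0)"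
  unfolding pdet_det by (subst det_single) auto



theorem corollary4p4:
  assumes "alg_closed TYPE('a::field)"
  shows
   "(\<forall>r m n k (U :: nat \<Rightarrow> nat \<Rightarrow> nat \<Rightarrow> 'a).
       2 \<le> r \<and> r \<le> m \<and> m \<le> n \<and> 1 \<le> k \<and>
       wedges_vanish r m n k U \<and>
       (\<exists>I. incr (r - 1) n I \<and> wedge (r - 1) (\<lambda>a i. U a 0 i) I \<noteq> 0)
       \<longrightarrow> (\<forall>w < 2 * k. \<forall>J. incr (r + 1) m J \<longrightarrow>
              (\<forall>I. incr (r + 1) n I \<longrightarrow> wedge_sum (r + 1) k U J w I = 0)))
    \<and>
    (\<forall>m n k (x :: nat \<Rightarrow> nat \<Rightarrow> nat \<Rightarrow> 'a).
       3 \<le> m \<and> m \<le> n \<and> 1 \<le> k \<and> x \<in> Z0 m n k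
       \<longrightarrow> (\<forall>w < 2 * k. \<forall>J. incr 3 m J \<longrightarrow>
              (\<forall>I. incr 3 n I \<longrightarrow> wedge_sum 3 k (\<lambda>i l j. x i j l) J w I = 0)))"
proof (intro conjI allI impI)
  fix r m n k w J I and U :: "nat \<Rightarrow> nat \<Rightarrow> nat \<Rightarrow> 'a"
  assume h: "2 \<le> r \<and> r \<le> m \<and> m \<le> n \<and> 1 \<le> k \<and> wedges_vanish r m n k U \<and>
       (\<exists>I. incr (r - 1) n I \<and> wedge (r - 1) (\<lambda>a i. U a 0 i) I \<noteq> 0)"
    and w: "w < 2 * k" and J: "incr (r + 1) m J" and I: "incr (r + 1) n I"
  then obtain I0 where I0: "incr (r - 1) n I0" "wedge (r - 1) (\<lambda>a i. U a 0 i) I0 \<noteq> 0" by blast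
  define q where "q = r - 1"
  have r: "r = Suc q" "r + 1 = q + 2" using h unfolding q_def by auto
  have "wedge_sum (q+2) k U J w I = 0"
  proof (rule main_poly[of q m n k U "\<lambda>a. a" I0])
    show "wedges_vanish (Suc q) m n k U" using h r by simp
    show "a < q \<Longrightarrow> a < m" for a using h r by simp
    show "b < q \<Longrightarrow> I0 b < n" for b using I0 unfolding incr_def q_def by simp
    have "poly (pdet q (\<lambda>a i. upoly k U a i) I0) 0 = wedge q (\<lambda>a i. U a 0 i) I0"
      using h by (simp add: poly_pdet poly_upoly0 wedge_def)
    thus "poly (pdet q (\<lambda>a i. upoly k U a i) I0) 0 \<noteq> 0" using I0 by (simp add: q_def)
    show "a < q + 2 \<Longrightarrow> J a < m" for a using J r unfolding incr_def by simp
    show "b < q + 2 \<Longrightarrow> I b < n" for b using I r unfolding incr_def by simp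
    show "w < 2 * k" by fact
  qed
  thus "wedge_sum (r + 1) k U J w I = 0" using r by simp
next
  fix m n k w J I and x :: "nat \<Rightarrow> nat \<Rightarrow> nat \<Rightarrow> 'a"
  assume h: "3 \<le> m \<and> m \<le> n \<and> 1 \<le> k \<and> x \<in> Z0 m n k"
    and w: "w < 2 * k" and J: "incr 3 m J" and I: "incr 3 n I"
  let ?f = "\<lambda>x::nat \<Rightarrow> nat \<Rightarrow> nat \<Rightarrow> 'a. wedge_sum 3 k (\<lambda>i l j. x i j l) J w I"
  have "?f y = 0" if y: "y \<in> {x \<in> Zset m n 2 k. \<exists>i<m. \<exists>j<n. x i j 0 \<noteq> 0}" for y
  proof -
    from y obtain i0 j0 where y1: "y \<in> Zset m n 2 k" "i0 < m" "j0 < n" "y i0 j0 0 \<noteq> 0" by blast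
    have "wedge_sum (1+2) k (\<lambda>i l j. y i j l) J w I = 0"
    proof (rule main_poly[of 1 m n k _ "\<lambda>_. i0" "\<lambda>_. j0"])
      show "wedges_vanish (Suc 1) m n k (\<lambda>i l j. y i j l)" using y1 by (simp add: Zset_def numeral_2_eq_2)
      show "poly (pdet 1 (\<lambda>a i. upoly k (\<lambda>i l j. y i j l) i0 i) (\<lambda>_. j0)) 0 \<noteq> 0"
        using y1 h unfolding pdet_one by (simp add: poly_upoly0)
      show "a < 1 + 2 \<Longrightarrow> J a < m" for a using J unfolding incr_def by simp
      show "b < 1 + 2 \<Longrightarrow> I b < n" for b using I unfolding incr_def by simp
    qed (use y1 w in auto)
    moreover have "(1+2::nat) = 3" by simp
    ultimately show ?thesis by metis
  qed
  moreover have "?f \<in> polyfun" by (rule pf_wedge_sum)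
  moreover have "\<forall>f\<in>polyfun. (\<forall>y\<in>{x \<in> Zset m n 2 k. \<exists>i<m. \<exists>j<n. x i j 0 \<noteq> 0}. f y = 0) \<longrightarrow> f x = 0"
    using h unfolding Z0_def zariski_closure_def by simp
  ultimately show "?f x = 0" by (simp only: Ball_def) (elim allE impE, assumption, rule allI, rule impI, simp, assumption)
qed

end
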